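(* Let $\mathbf G$ be a finite oriented metric graph with Dirac operator data as in the context, let $\Lambda$ be a linear relation in the vertex space $\mathcal F$ and $\overline\Lambda=\{(\overline f,\overline{f'}):(f,f')\in\Lambda\}$ (componentwise complex conjugation). For a linear relation $\Theta$ in $\mathcal F$ let $D^{\Theta_W}$ be the restriction of $D^{max}$ to $\{\Phi\in\widetilde H^1(\mathbf G;\mathbb C^2):(W\Gamma^1\Phi,W\Gamma^2\Phi)\in\Theta\}$. Let $T:\mathscr H\to\mathscr H$ be the antilinear map $T\Phi=(\sigma_3\overline{\phi_j})_{j\in\mathcal J}$. Then $$TD^{\Lambda_W}=D^{\overline\Lambda_W}T.$$ In particular, $D^{\Lambda_W}$ and $D^{\overline\Lambda_W}$ are (antilinearly) similar.
   Context: Let $m\ge0$. A finite oriented metric graph $\mathbf G$ has a finite nonempty vertex set $\mathcal V$, finite sets $\mathcal I$ (internal) and $\mathcal E$ (external) of edges, $\mathcal J=\mathcal I\cup\mathcal E\ne\emptyset$, no loops. Each internal edge $i$ has initial vertex $\partial_-i$ and terminal vertex $\partial_+i$ and is identified with $I_i=(a_i,b_i)$, $a_i\leftrightarrow\partial_-i$, $b_i\leftrightarrow\partial_+i$. An external edge $e$ attached to a vertex is identified with $(a_e,+\infty)$ ($\rho(e)=-1$) or $(-\infty,b_e)$ ($\rho(e)=1$); $\partial e$ is the finite endpoint. $\mathscr H=\bigoplus_jL^2(I_j;\mathbb C^2)$, $\widetilde H^1(\mathbf G;\mathbb C^2)=\bigoplus_jH^1(I_j;\mathbb C^2)$, $\Phi=(\phi_j)_j$,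 $\phi_j=(\phi_j^1,\phi_j^2)^T$; $D^{max}$ acts edgewise by $-i\sigma_1\phi_j'+m\sigma_3\phi_j$ ($\sigma_1=\begin{pmatrix}0&1\\1&0\end{pmatrix}$, $\sigma_3=\operatorname{diag}(1,-1)$). $\mathcal G=\bigoplus_j\mathcal G_j$, $\mathcal G_i=\mathbb C^2$, $\mathcal G_e=\mathbb C$; $\Gamma^k=\bigoplus_j\Gamma^k_j$, $\Gamma^1_i\Phi=(\phi_i^1(a_i),\phi_i^1(b_i))^T$, $\Gamma^2_i\Phi=(i\phi_i^2(a_i),-i\phi_i^2(b_i))^T$, $\Gamma^1_e\Phi=\phi_e^1(\partial e)$, $\Gamma^2_e\Phi=-i\rho(e)\phi^2_e(\partial e)$. Vertex space $\mathcal F=\bigoplus_v\mathbb C^{\deg v}$. Coordinates of $\mathcal G$ and $\mathcal F$ are labelled by the pairs $(j,v)$, $v$ a vertex endpoint of $j$: in $\mathcal G$ ordered edge by edge (for internal edges the pair with the initial vertex first), in $\mathcal F$ vertex by vertex and within a vertex by the fixed edge order; $W:\mathcal G\to\mathcal F$ is the permutation matrix sending coordinate $(j,v)$ of $\mathcal G$ to coordinate $(j,v)$ of $\mathcal F$. *)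

theory Defs
  imports "HOL-Analysis.Analysis"
begin

text \<open>Internal edge i is the interval
  (left i, right i), left i corresponding to the initial vertex init i and
  right i to the terminal vertex tvert i.  External edge e is attached at att e;
  it is (left e, +infinity) if rho e = -1 and (-infinity, right e) if rho e = 1.\<close>

record ('v, 'e) metric_graph =
  verts :: "'v set"
  int_edges :: "'e set"
  ext_edges :: "'e set"
  init :: "'e \<Rightarrow> 'v"
  tvert :: "'e \<Rightarrow> 'v"
  att :: "'e \<Rightarrow> 'v"
  rho :: "'e \<Rightarrow> int"
  left :: "'e \<Rightarrow> real"
  right :: "'e \<Rightarrow> real"

definition edges :: "('v, 'e) metric_graph \<Rightarrow> 'e set" where
  "edges G = int_edges G \<union> ext_edges G"

definition wf_graph :: "('v, 'e) metric_graph \<Rightarrow> bool" where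
  "wf_graph G \<longleftrightarrow>
     finite (verts G) \<and> verts G \<noteq> {} \<and>
     finite (int_edges G) \<and> finite (ext_edges G) \<and>
     int_edges G \<inter> ext_edges G = {} \<and> edges G \<noteq> {} \<and>
     (\<forall>i\<in>int_edges G. init G i \<in> verts G \<and> tvert G i \<in> verts G \<and>
                        init G i \<noteq> tvert G i \<and> left G i < right G i) \<and>
     (\<forall>e\<in>ext_edges G. att G e \<in> verts G \<and> (rho G e = -1 \<or> rho G e = 1))"

definition edge_interval :: "('v, 'e) metric_graph \<Rightarrow> 'e \<Rightarrow> real set" where
  "edge_interval G j =
     (if j \<in> int_edges G then {left G j <..< right G j}
      else if rho G j = -1 then {left G j <..} else {..< right G j})"

definition ends :: "('v, 'e) metric_graph \<Rightarrow> 'e \<Rightarrow> 'v set" where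
  "ends G j = (if j \<in> int_edges G then {init G j, tvert G j} else {att G j})"

definition incid :: "('v, 'e) metric_graph \<Rightarrow> ('v \<times> 'e) set" where
  "incid G = {(v, j). j \<in> edges G \<and> v \<in> ends G j}"

text \<open>Vertex space F = (+)_v C^(deg v): its coordinates are labelled by the
  incidence pairs (v, j); we represent it as the functions vanishing outside.\<close>
definition vertex_space :: "('v, 'e) metric_graph \<Rightarrow> ('v \<times> 'e \<Rightarrow> complex) set" where
  "vertex_space G = {f. \<forall>p. p \<notin> incid G \<longrightarrow> f p = 0}"

definition linear_relation ::
  "('v, 'e) metric_graph \<Rightarrow> (('v \<times> 'e \<Rightarrow> complex) \<times> ('v \<times> 'e \<Rightarrow> complex)) set \<Rightarrow> bool" where
  "linear_relation G \<Lambda> \<longleftrightarrow>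
     \<Lambda> \<subseteq> vertex_space G \<times> vertex_space G \<and>
     ((\<lambda>_. 0), (\<lambda>_. 0)) \<in> \<Lambda> \<and>
     (\<forall>f f' h h'. (f, f') \<in> \<Lambda> \<longrightarrow> (h, h') \<in> \<Lambda> \<longrightarrow>
        ((\<lambda>p. f p + h p), (\<lambda>p. f' p + h' p)) \<in> \<Lambda>) \<and>
     (\<forall>c f f'. (f, f') \<in> \<Lambda> \<longrightarrow> ((\<lambda>p. c * f p), (\<lambda>p. c * f' p)) \<in> \<Lambda>)"

definition conj_rel ::
  "(('a \<Rightarrow> complex) \<times> ('a \<Rightarrow> complex)) set \<Rightarrow> (('a \<Rightarrow> complex) \<times> ('a \<Rightarrow> complex)) set" where
  "conj_rel \<Lambda> = {((\<lambda>p. cnj (f p)), (\<lambda>p. cnj (f' p))) | f f'. (f, f') \<in> \<Lambda>}"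

text \<open>A function Phi :: 'e => real => complex x complex; Phi j x = (phi_j^1 x, phi_j^2 x).\<close>

definition L2_on :: "real set \<Rightarrow> (real \<Rightarrow> complex \<times> complex) \<Rightarrow> bool" where
  "L2_on I f \<longleftrightarrow> f \<in> borel_measurable (lebesgue_on I) \<and>
                  integrable (lebesgue_on I) (\<lambda>x. (norm (f x))\<^sup>2)"

text \<open>H^1 on an interval, represented by its (absolutely) continuous representative:
  f in L^2 with an L^2 (weak) derivative g, f y - f x = integral of g over [x,y].\<close>
definition is_H1_deriv :: "real set \<Rightarrow> (real \<Rightarrow> complex \<times> complex) \<Rightarrow> (real \<Rightarrow> complex \<times> complex) \<Rightarrow> bool" where
  "is_H1_deriv I f g \<longleftrightarrow> L2_on I f \<and> L2_on I g \<and>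
     (\<forall>x\<in>I. \<forall>y\<in>I. x \<le> y \<longrightarrow> (g has_integral (f y - f x)) {x..y})"

text \<open>Elements of the Hilbert space H = (+)_j L^2(I_j; C^2), extended by zero off I_j.\<close>
definition hilbert_space :: "('v, 'e) metric_graph \<Rightarrow> ('e \<Rightarrow> real \<Rightarrow> complex \<times> complex) set" where
  "hilbert_space G = {\<Phi>. (\<forall>j. j \<notin> edges G \<longrightarrow> (\<forall>x. \<Phi> j x = 0)) \<and>
      (\<forall>j\<in>edges G. L2_on (edge_interval G j) (\<Phi> j) \<and>
                   (\<forall>x. x \<notin> edge_interval G j \<longrightarrow> \<Phi> j x = 0))}"

definition H1_space :: "('v, 'e) metric_graph \<Rightarrow> ('e \<Rightarrow> real \<Rightarrow> complex \<times> complex) set" where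
  "H1_space G = {\<Phi>. \<Phi> \<in> hilbert_space G \<and>
      (\<forall>j\<in>edges G. \<exists>g. is_H1_deriv (edge_interval G j) (\<Phi> j) g)}"

definition val_left :: "(real \<Rightarrow> 'b::t2_space) \<Rightarrow> real \<Rightarrow> 'b" where
  "val_left f a = Lim (at_right a) f"
definition val_right :: "(real \<Rightarrow> 'b::t2_space) \<Rightarrow> real \<Rightarrow> 'b" where
  "val_right f b = Lim (at_left b) f"

definition val_ext :: "('v, 'e) metric_graph \<Rightarrow> 'e \<Rightarrow> (real \<Rightarrow> 'b::t2_space) \<Rightarrow> 'b" where
  "val_ext G e f = (if rho G e = -1 then val_left f (left G e) else val_right f (right G e))"

text \<open>The space G: coordinates labelled by (j, False) (the a_j end / the finite end
  for external edges) and (j, True) (the b_j end of internal edges).\<close>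

definition Gamma1 :: "('v, 'e) metric_graph \<Rightarrow> ('e \<Rightarrow> real \<Rightarrow> complex \<times> complex) \<Rightarrow> ('e \<times> bool \<Rightarrow> complex)" where
  "Gamma1 G \<Phi> = (\<lambda>(j, s).
     if j \<in> int_edges G then
       (if s then val_right (\<lambda>x. fst (\<Phi> j x)) (right G j)
             else val_left (\<lambda>x. fst (\<Phi> j x)) (left G j))
     else if j \<in> ext_edges G \<and> \<not> s then val_ext G j (\<lambda>x. fst (\<Phi> j x))
     else 0)"

definition Gamma2 :: "('v, 'e) metric_graph \<Rightarrow> ('e \<Rightarrow> real \<Rightarrow> complex \<times> complex) \<Rightarrow> ('e \<times> bool \<Rightarrow> complex)" where
  "Gamma2 G \<Phi> = (\<lambda>(j, s).
     if j \<in> int_edges G then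
       (if s then - \<i> * val_right (\<lambda>x. snd (\<Phi> j x)) (right G j)
             else \<i> * val_left (\<lambda>x. snd (\<Phi> j x)) (left G j))
     else if j \<in> ext_edges G \<and> \<not> s then
       - \<i> * of_int (rho G j) * val_ext G j (\<lambda>x. snd (\<Phi> j x))
     else 0)"

definition Wmap :: "('v, 'e) metric_graph \<Rightarrow> ('e \<times> bool \<Rightarrow> complex) \<Rightarrow> ('v \<times> 'e \<Rightarrow> complex)" where
  "Wmap G g = (\<lambda>(v, j).
     if j \<in> int_edges G then
       (if v = init G j then g (j, False) else if v = tvert G j then g (j, True) else 0)
     else if j \<in> ext_edges G \<and> v = att G j then g (j, False)
     else 0)"

text \<open>Edgewise action -i sigma_1 phi' + m sigma_3 phi, with phi' = g.\<close>
definition dirac_action :: "real \<Rightarrow> complex \<times> complex \<Rightarrow> complex \<times> complex \<Rightarrow> complex \<times> complex" where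
  "dirac_action m \<phi> g = (- \<i> * snd g + of_real m * fst \<phi>, - \<i> * fst g - of_real m * snd \<phi>)"

text \<open>Since D Phi is an
  L^2 class, the graph contains every representative Psi (zero off the edges).\<close>
definition dirac_rel ::
  "('v, 'e) metric_graph \<Rightarrow> real \<Rightarrow> (('v \<times> 'e \<Rightarrow> complex) \<times> ('v \<times> 'e \<Rightarrow> complex)) set
   \<Rightarrow> (('e \<Rightarrow> real \<Rightarrow> complex \<times> complex) \<times> ('e \<Rightarrow> real \<Rightarrow> complex \<times> complex)) set" where
  "dirac_rel G m \<Theta> = {(\<Phi>, \<Psi>). \<Phi> \<in> H1_space G \<and>
      (Wmap G (Gamma1 G \<Phi>), Wmap G (Gamma2 G \<Phi>)) \<in> \<Theta> \<and>
      (\<forall>j. j \<notin> edges G \<longrightarrow> (\<forall>x. \<Psi> j x = 0)) \<and>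
      (\<forall>j\<in>edges G. (\<forall>x. x \<notin> edge_interval G j \<longrightarrow> \<Psi> j x = 0) \<and>
         (\<exists>g. is_H1_deriv (edge_interval G j) (\<Phi> j) g \<and>
              (\<forall>x\<in>edge_interval G j. \<Psi> j x = dirac_action m (\<Phi> j x) (g x))))}"

definition Tmap :: "('e \<Rightarrow> real \<Rightarrow> complex \<times> complex) \<Rightarrow> ('e \<Rightarrow> real \<Rightarrow> complex \<times> complex)" where
  "Tmap \<Phi> = (\<lambda>j x. (cnj (fst (\<Phi> j x)), - cnj (snd (\<Phi> j x))))"

end

theory Submission imports Defs begin

lemma le1sq: "(t::real) \<le> 1 + t\<^sup>2"
proof (cases "t \<le> 1")
  case True then show ?thesis by (simp add: add_increasing2)
next
  case False then have "t \<le> t * t" by (simp add: mult_le_cancel_left1)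
  then show ?thesis by (simp add: power2_eq_square)
qed

lemma H1_abs_int:
  fixes f g :: "real \<Rightarrow> complex \<times> complex"
  assumes H: "is_H1_deriv I f g" and I: "I \<in> sets lebesgue" and sub: "{a<..<d} \<subseteq> I"
  shows "g integrable_on {a..d}"
proof -
  have gm: "g \<in> borel_measurable (lebesgue_on I)" and gi: "integrable (lebesgue_on I) (\<lambda>x. (norm (g x))\<^sup>2)"
    using H unfolding is_H1_deriv_def L2_on_def by auto
  have "(\<lambda>x. (norm (g x))\<^sup>2) integrable_on I" using integrable_on_lebesgue_on[OF gi I] .
  then have "(\<lambda>x. (norm (g x))\<^sup>2) absolutely_integrable_on I"
    by (rule nonnegative_absolutely_integrable_1) simp
  then have "(\<lambda>x. (norm (g x))\<^sup>2) absolutely_integrable_on {a<..<d}"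
    by (rule set_integrable_subset) (use sub in auto)
  then have i2: "(\<lambda>x. (norm (g x))\<^sup>2) integrable_on {a<..<d}"
    using set_lebesgue_integral_eq_integral(1) by blast
  have i1: "(\<lambda>x. 1::real) integrable_on {a<..<d}"
    unfolding integrable_on_open_interval_real by (rule integrable_const_ivl)
  have "g absolutely_integrable_on {a<..<d}"
  proof (rule measurable_bounded_by_integrable_imp_absolutely_integrable)
    show "g \<in> borel_measurable (lebesgue_on {a<..<d})"
      using measurable_restrict_mono[OF gm sub] .
    show "{a<..<d} \<in> sets lebesgue" by simp
    show "(\<lambda>x. 1 + (norm (g x))\<^sup>2) integrable_on {a<..<d}"
      using integrable_add[OF i1 i2] by simp
    fix x show "norm (g x) \<le> 1 + (norm (g x))\<^sup>2"
      by (rule le1sq)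
  qed
  then show ?thesis
    using set_lebesgue_integral_eq_integral(1) integrable_on_open_interval_real by metis
qed

lemma H1_lim_right:
  fixes f g :: "real \<Rightarrow> complex \<times> complex"
  assumes H: "is_H1_deriv I f g" and I: "I \<in> sets lebesgue" and ac: "a < c" and sub: "{a<..<c} \<subseteq> I"
  shows "\<exists>L. (f \<longlongrightarrow> L) (at_right a)"
proof -
  define d where "d = (a + c) / 2"
  have ad: "a < d" "d < c" using ac by (auto simp: d_def)
  have sub': "{a<..<d} \<subseteq> I" using sub ad by auto
  have dI: "d \<in> I" using sub ad by auto
  have gi: "g integrable_on {a..d}" using H1_abs_int[OF H I sub'] .
  have cont: "continuous_on {a..d} (\<lambda>x. integral {x..d} g)"
    using indefinite_integral_continuous_1'[OF gi] .
  have lim: "((\<lambda>x. f d - integral {x..d} g) \<longlongrightarrow> f d - integral {a..d} g) (at_right a)"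
    using continuous_on_Icc_at_rightD[OF cont ad(1)] by (intro tendsto_intros) simp
  have ev: "\<forall>\<^sub>F x in at_right a. f d - integral {x..d} g = f x"
  proof (rule eventually_at_rightI[OF _ ad(1)])
    fix x assume x: "x \<in> {a<..<d}"
    then have "x \<in> I" using sub' by auto
    then have "(g has_integral (f d - f x)) {x..d}"
      using H dI x unfolding is_H1_deriv_def by auto
    then show "f d - integral {x..d} g = f x" by (simp add: integral_unique)
  qed
  show ?thesis using Lim_transform_eventually[OF lim ev] by blast
qed

lemma H1_lim_left:
  fixes f g :: "real \<Rightarrow> complex \<times> complex"
  assumes H: "is_H1_deriv I f g" and I: "I \<in> sets lebesgue" and ac: "c < b" and sub: "{c<..<b} \<subseteq> I"
  shows "\<exists>L. (f \<longlongrightarrow> L) (at_left b)"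
proof -
  define d where "d = (b + c) / 2"
  have ad: "c < d" "d < b" using ac by (auto simp: d_def)
  have sub': "{d<..<b} \<subseteq> I" using sub ad by auto
  have dI: "d \<in> I" using sub ad by auto
  have gi: "g integrable_on {d..b}" using H1_abs_int[OF H I sub'] .
  have cont: "continuous_on {d..b} (\<lambda>x. integral {d..x} g)"
    using indefinite_integral_continuous_1[OF gi] .
  have lim: "((\<lambda>x. f d + integral {d..x} g) \<longlongrightarrow> f d + integral {d..b} g) (at_left b)"
    using continuous_on_Icc_at_leftD[OF cont ad(2)] by (intro tendsto_intros) simp
  have ev: "\<forall>\<^sub>F x in at_left b. f d + integral {d..x} g = f x"
  proof (rule eventually_at_leftI[OF _ ad(2)])
    fix x assume x: "x \<in> {d<..<b}"
    then have "x \<in> I" using sub' by auto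
    then have "(g has_integral (f x - f d)) {d..x}"
      using H dI x unfolding is_H1_deriv_def by auto
    then show "f d + integral {d..x} g = f x" by (simp add: integral_unique)
  qed
  show ?thesis using Lim_transform_eventually[OF lim ev] by blast
qed

lemma edge_lims:
  assumes wf: "wf_graph G" and P: "\<Phi> \<in> H1_space G"
  shows "j \<in> int_edges G \<Longrightarrow> \<exists>L. (\<Phi> j \<longlongrightarrow> L) (at_right (left G j))"
    and "j \<in> int_edges G \<Longrightarrow> \<exists>L. (\<Phi> j \<longlongrightarrow> L) (at_left (right G j))"
    and "j \<in> ext_edges G \<Longrightarrow> rho G j = -1 \<Longrightarrow> \<exists>L. (\<Phi> j \<longlongrightarrow> L) (at_right (left G j))"
    and "j \<in> ext_edges G \<Longrightarrow> rho G j \<noteq> -1 \<Longrightarrow> \<exists>L. (\<Phi> j \<longlongrightarrow> L) (at_left (right G j))"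
proof -
  have H: "\<exists>g. is_H1_deriv (edge_interval G j) (\<Phi> j) g" if "j \<in> edges G"
    using P that unfolding H1_space_def by auto
  have Imeas: "edge_interval G j \<in> sets lebesgue"
    unfolding edge_interval_def by auto
  have dis: "int_edges G \<inter> ext_edges G = {}" using wf unfolding wf_graph_def by auto
  {
    assume j: "j \<in> int_edges G"
    then have lr: "left G j < right G j" using wf unfolding wf_graph_def by auto
    have EI: "edge_interval G j = {left G j<..<right G j}" using j by (simp add: edge_interval_def)
    obtain g where g: "is_H1_deriv (edge_interval G j) (\<Phi> j) g"
      using H j unfolding edges_def by auto
    show "\<exists>L. (\<Phi> j \<longlongrightarrow> L) (at_right (left G j))"
      by (rule H1_lim_right[OF g Imeas lr]) (simp add: EI)
    show "\<exists>L. (\<Phi> j \<longlongrightarrow> L) (at_left (right G j))"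
      by (rule H1_lim_left[OF g Imeas lr]) (simp add: EI)
  }
  {
    assume j: "j \<in> ext_edges G" and r: "rho G j = -1"
    have nj: "j \<notin> int_edges G" using j dis by auto
    have EI: "edge_interval G j = {left G j<..}" using nj r by (simp add: edge_interval_def)
    obtain g where g: "is_H1_deriv (edge_interval G j) (\<Phi> j) g"
      using H j unfolding edges_def by auto
    show "\<exists>L. (\<Phi> j \<longlongrightarrow> L) (at_right (left G j))"
      by (rule H1_lim_right[OF g Imeas, of _ "left G j + 1"]) (auto simp: EI)
  }
  {
    assume j: "j \<in> ext_edges G" and r: "rho G j \<noteq> -1"
    have nj: "j \<notin> int_edges G" using j dis by auto
    have EI: "edge_interval G j = {..<right G j}" using nj r by (simp add: edge_interval_def)
    obtain g where g: "is_H1_deriv (edge_interval G j) (\<Phi> j) g"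
      using H j unfolding edges_def by auto
    show "\<exists>L. (\<Phi> j \<longlongrightarrow> L) (at_left (right G j))"
      by (rule H1_lim_left[OF g Imeas, of "right G j - 1"]) (auto simp: EI)
  }
qed

lemma Lim_cnj_fst:
  fixes f :: "real \<Rightarrow> complex \<times> complex"
  assumes "\<exists>L. (f \<longlongrightarrow> L) F" "F \<noteq> bot"
  shows "Lim F (\<lambda>x. cnj (fst (f x))) = cnj (Lim F (\<lambda>x. fst (f x)))"
proof -
  obtain L where L: "(f \<longlongrightarrow> L) F" using assms by auto
  have "((\<lambda>x. fst (f x)) \<longlongrightarrow> fst L) F" using L by (intro tendsto_intros)
  moreover have "((\<lambda>x. cnj (fst (f x))) \<longlongrightarrow> cnj (fst L)) F" using L by (intro tendsto_intros)
  ultimately show ?thesis using assms(2) by (simp add: tendsto_Lim)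
qed

lemma Lim_cnj_snd:
  fixes f :: "real \<Rightarrow> complex \<times> complex"
  assumes "\<exists>L. (f \<longlongrightarrow> L) F" "F \<noteq> bot"
  shows "Lim F (\<lambda>x. - cnj (snd (f x))) = - cnj (Lim F (\<lambda>x. snd (f x)))"
proof -
  obtain L where L: "(f \<longlongrightarrow> L) F" using assms by auto
  have "((\<lambda>x. snd (f x)) \<longlongrightarrow> snd L) F" using L by (intro tendsto_intros)
  moreover have "((\<lambda>x. - cnj (snd (f x))) \<longlongrightarrow> - cnj (snd L)) F" using L by (intro tendsto_intros)
  ultimately show ?thesis using assms(2) by (simp add: tendsto_Lim)
qed

lemma Gamma_Tmap:
  assumes wf: "wf_graph G" and P: "\<Phi> \<in> H1_space G"
  shows "Gamma1 G (Tmap \<Phi>) = (\<lambda>p. cnj (Gamma1 G \<Phi> p))"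
    and "Gamma2 G (Tmap \<Phi>) = (\<lambda>p. cnj (Gamma2 G \<Phi> p))"
proof -
  note lims = edge_lims[OF wf P]
  have A: "\<And>j. j \<in> int_edges G \<Longrightarrow> Lim (at_right (left G j)) (\<lambda>x. cnj (fst (\<Phi> j x))) = cnj (Lim (at_right (left G j)) (\<lambda>x. fst (\<Phi> j x)))"
          "\<And>j. j \<in> int_edges G \<Longrightarrow> Lim (at_left (right G j)) (\<lambda>x. cnj (fst (\<Phi> j x))) = cnj (Lim (at_left (right G j)) (\<lambda>x. fst (\<Phi> j x)))"
          "\<And>j. j \<in> ext_edges G \<Longrightarrow> rho G j = -1 \<Longrightarrow> Lim (at_right (left G j)) (\<lambda>x. cnj (fst (\<Phi> j x))) = cnj (Lim (at_right (left G j)) (\<lambda>x. fst (\<Phi> j x)))"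
          "\<And>j. j \<in> ext_edges G \<Longrightarrow> rho G j \<noteq> -1 \<Longrightarrow> Lim (at_left (right G j)) (\<lambda>x. cnj (fst (\<Phi> j x))) = cnj (Lim (at_left (right G j)) (\<lambda>x. fst (\<Phi> j x)))"
    by (rule Lim_cnj_fst; (rule lims; assumption)?; simp)+
  have B: "\<And>j. j \<in> int_edges G \<Longrightarrow> Lim (at_right (left G j)) (\<lambda>x. - cnj (snd (\<Phi> j x))) = - cnj (Lim (at_right (left G j)) (\<lambda>x. snd (\<Phi> j x)))"
          "\<And>j. j \<in> int_edges G \<Longrightarrow> Lim (at_left (right G j)) (\<lambda>x. - cnj (snd (\<Phi> j x))) = - cnj (Lim (at_left (right G j)) (\<lambda>x. snd (\<Phi> j x)))"
          "\<And>j. j \<in> ext_edges G \<Longrightarrow> rho G j = -1 \<Longrightarrow> Lim (at_right (left G j)) (\<lambda>x. - cnj (snd (\<Phi> j x))) = - cnj (Lim (at_right (left G j)) (\<lambda>x. snd (\<Phi> j x)))"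
          "\<And>j. j \<in> ext_edges G \<Longrightarrow> rho G j \<noteq> -1 \<Longrightarrow> Lim (at_left (right G j)) (\<lambda>x. - cnj (snd (\<Phi> j x))) = - cnj (Lim (at_left (right G j)) (\<lambda>x. snd (\<Phi> j x)))"
    by (rule Lim_cnj_snd; (rule lims; assumption)?; simp)+
  show "Gamma1 G (Tmap \<Phi>) = (\<lambda>p. cnj (Gamma1 G \<Phi> p))"
    by (rule ext) (auto simp: Gamma1_def val_left_def val_right_def val_ext_def Tmap_def A)
  show "Gamma2 G (Tmap \<Phi>) = (\<lambda>p. cnj (Gamma2 G \<Phi> p))"
    by (rule ext) (auto simp: Gamma2_def val_left_def val_right_def val_ext_def Tmap_def B)
qed

definition tconj :: "complex \<times> complex \<Rightarrow> complex \<times> complex" where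
  "tconj z = (cnj (fst z), - cnj (snd z))"

lemma tconj_tconj[simp]: "tconj (tconj z) = z"
  by (simp add: tconj_def)

lemma norm_tconj[simp]: "norm (tconj z) = norm z"
  by (cases z) (simp add: tconj_def norm_Pair)

lemma tconj_diff: "tconj (a - b) = tconj a - tconj b"
  by (simp add: tconj_def)

lemma tconj_zero_iff[simp]: "tconj z = 0 \<longleftrightarrow> z = 0"
  by (cases z) (auto simp: tconj_def zero_prod_def)

lemma bounded_linear_tconj: "bounded_linear tconj"
proof -
  have "bounded_linear (\<lambda>z::complex \<times> complex. (cnj (fst z), - cnj (snd z)))"
    by (intro bounded_linear_Pair bounded_linear_compose[OF bounded_linear_cnj]
        bounded_linear_minus bounded_linear_fst bounded_linear_snd)
  then show ?thesis unfolding tconj_def[abs_def] .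
qed

lemma Tmap_tconj: "Tmap \<Phi> = (\<lambda>j x. tconj (\<Phi> j x))"
  by (simp add: Tmap_def tconj_def)

lemma Tmap_Tmap[simp]: "Tmap (Tmap \<Phi>) = \<Phi>"
  by (simp add: Tmap_tconj)

lemma L2_tconj: "L2_on I f \<Longrightarrow> L2_on I (\<lambda>x. tconj (f x))"
  unfolding L2_on_def
proof (elim conjE, intro conjI)
  assume "f \<in> borel_measurable (lebesgue_on I)"
  moreover have "continuous_on UNIV tconj"
    using bounded_linear_tconj linear_continuous_on by blast
  ultimately show "(\<lambda>x. tconj (f x)) \<in> borel_measurable (lebesgue_on I)"
    using borel_measurable_continuous_on by blast
next
  assume "integrable (lebesgue_on I) (\<lambda>x. (norm (f x))\<^sup>2)"
  then show "integrable (lebesgue_on I) (\<lambda>x. (norm (tconj (f x)))\<^sup>2)" by simp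
qed

lemma H1_tconj: "is_H1_deriv I f g \<Longrightarrow> is_H1_deriv I (\<lambda>x. tconj (f x)) (\<lambda>x. tconj (g x))"
  unfolding is_H1_deriv_def
proof (elim conjE, intro conjI ballI impI)
  assume "L2_on I f" "L2_on I g"
  then show "L2_on I (\<lambda>x. tconj (f x))" "L2_on I (\<lambda>x. tconj (g x))" by (auto intro: L2_tconj)
next
  fix x y assume H: "\<forall>x\<in>I. \<forall>y\<in>I. x \<le> y \<longrightarrow> (g has_integral f y - f x) {x..y}"
    and xy: "x \<in> I" "y \<in> I" "x \<le> y"
  have "((tconj \<circ> g) has_integral tconj (f y - f x)) {x..y}"
    using has_integral_linear[OF _ bounded_linear_tconj] H xy by blast
  then show "((\<lambda>x. tconj (g x)) has_integral tconj (f y) - tconj (f x)) {x..y}"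
    by (simp add: tconj_diff o_def)
qed

lemma dirac_tconj: "dirac_action m (tconj p) (tconj g) = tconj (dirac_action m p g)"
  by (simp add: dirac_action_def tconj_def)

lemma Tmap_H1:
  assumes "\<Phi> \<in> H1_space G" shows "Tmap \<Phi> \<in> H1_space G"
  using assms unfolding H1_space_def hilbert_space_def Tmap_tconj
proof (auto intro: L2_tconj)
  fix j assume "\<forall>j\<in>edges G. Ex (is_H1_deriv (edge_interval G j) (\<Phi> j))" "j \<in> edges G"
  then obtain g where "is_H1_deriv (edge_interval G j) (\<Phi> j) g" by blast
  then show "Ex (is_H1_deriv (edge_interval G j) (\<lambda>x. tconj (\<Phi> j x)))"
    using H1_tconj by blast
qed

lemma Wmap_cnj: "Wmap G (\<lambda>p. cnj (h p)) = (\<lambda>q. cnj (Wmap G h q))"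
  by (rule ext) (auto simp: Wmap_def split: prod.split)

lemma conj_rel_mem: "(a, b) \<in> \<Theta> \<Longrightarrow> ((\<lambda>q. cnj (a q)), (\<lambda>q. cnj (b q))) \<in> conj_rel \<Theta>"
  unfolding conj_rel_def by blast

lemma conj_rel_conj_rel: "conj_rel (conj_rel \<Theta>) = \<Theta>"
  unfolding conj_rel_def by force

lemma key:
  assumes wf: "wf_graph G" and D: "(\<Phi>, \<Psi>) \<in> dirac_rel G m \<Theta>"
  shows "(Tmap \<Phi>, Tmap \<Psi>) \<in> dirac_rel G m (conj_rel \<Theta>)"
proof -
  have P: "\<Phi> \<in> H1_space G"
    and B: "(Wmap G (Gamma1 G \<Phi>), Wmap G (Gamma2 G \<Phi>)) \<in> \<Theta>"
    and Z: "\<forall>j. j \<notin> edges G \<longrightarrow> (\<forall>x. \<Psi> j x = 0)"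
    and E: "\<forall>j\<in>edges G. (\<forall>x. x \<notin> edge_interval G j \<longrightarrow> \<Psi> j x = 0) \<and>
         (\<exists>g. is_H1_deriv (edge_interval G j) (\<Phi> j) g \<and>
              (\<forall>x\<in>edge_interval G j. \<Psi> j x = dirac_action m (\<Phi> j x) (g x)))"
    using D unfolding dirac_rel_def by auto
  have B': "(Wmap G (Gamma1 G (Tmap \<Phi>)), Wmap G (Gamma2 G (Tmap \<Phi>))) \<in> conj_rel \<Theta>"
    unfolding Gamma_Tmap[OF wf P] Wmap_cnj by (rule conj_rel_mem[OF B])
  have E': "\<forall>j\<in>edges G. (\<forall>x. x \<notin> edge_interval G j \<longrightarrow> Tmap \<Psi> j x = 0) \<and>
         (\<exists>g. is_H1_deriv (edge_interval G j) (Tmap \<Phi> j) g \<and>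
              (\<forall>x\<in>edge_interval G j. Tmap \<Psi> j x = dirac_action m (Tmap \<Phi> j x) (g x)))"
  proof
    fix j assume j: "j \<in> edges G"
    obtain g where g: "is_H1_deriv (edge_interval G j) (\<Phi> j) g"
      "\<forall>x\<in>edge_interval G j. \<Psi> j x = dirac_action m (\<Phi> j x) (g x)"
      using E j by blast
    have "is_H1_deriv (edge_interval G j) (Tmap \<Phi> j) (\<lambda>x. tconj (g x))"
      using H1_tconj[OF g(1)] by (simp add: Tmap_tconj)
    moreover have "\<forall>x\<in>edge_interval G j. Tmap \<Psi> j x = dirac_action m (Tmap \<Phi> j x) (tconj (g x))"
      using g(2) by (simp add: Tmap_tconj dirac_tconj)
    moreover have "\<forall>x. x \<notin> edge_interval G j \<longrightarrow> Tmap \<Psi> j x = 0"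
      using E j by (simp add: Tmap_tconj)
    ultimately show "(\<forall>x. x \<notin> edge_interval G j \<longrightarrow> Tmap \<Psi> j x = 0) \<and>
         (\<exists>g. is_H1_deriv (edge_interval G j) (Tmap \<Phi> j) g \<and>
              (\<forall>x\<in>edge_interval G j. Tmap \<Psi> j x = dirac_action m (Tmap \<Phi> j x) (g x)))"
      by blast
  qed
  show ?thesis
    unfolding dirac_rel_def using Tmap_H1[OF P] B' E' Z by (simp add: Tmap_tconj)
qed

theorem theorem4p14:
  fixes G :: "('v, 'e) metric_graph" and m :: real
    and \<Lambda> :: "(('v \<times> 'e \<Rightarrow> complex) \<times> ('v \<times> 'e \<Rightarrow> complex)) set"
  assumes "wf_graph G" and "m \<ge> 0" and "linear_relation G \<Lambda>"
  shows "{(\<Phi>, Tmap \<Psi>) | \<Phi> \<Psi>. (\<Phi>, \<Psi>) \<in> dirac_rel G m \<Lambda>}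
           = {(\<Phi>, \<Psi>) | \<Phi> \<Psi>. (Tmap \<Phi>, \<Psi>) \<in> dirac_rel G m (conj_rel \<Lambda>)}
       \<and> dirac_rel G m (conj_rel \<Lambda>) = {(Tmap \<Phi>, Tmap \<Psi>) | \<Phi> \<Psi>. (\<Phi>, \<Psi>) \<in> dirac_rel G m \<Lambda>}"
proof
  note K = key[OF assms(1)]
  have K2: "(Tmap \<Phi>, Tmap \<Psi>) \<in> dirac_rel G m \<Lambda>" if "(\<Phi>, \<Psi>) \<in> dirac_rel G m (conj_rel \<Lambda>)" for \<Phi> \<Psi>
    using K[OF that] by (simp add: conj_rel_conj_rel)
  show "{(\<Phi>, Tmap \<Psi>) | \<Phi> \<Psi>. (\<Phi>, \<Psi>) \<in> dirac_rel G m \<Lambda>}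
           = {(\<Phi>, \<Psi>) | \<Phi> \<Psi>. (Tmap \<Phi>, \<Psi>) \<in> dirac_rel G m (conj_rel \<Lambda>)}"
  proof (intro equalityI subsetI)
    fix p assume "p \<in> {(\<Phi>, Tmap \<Psi>) | \<Phi> \<Psi>. (\<Phi>, \<Psi>) \<in> dirac_rel G m \<Lambda>}"
    then obtain \<Phi> \<Psi> where p: "p = (\<Phi>, Tmap \<Psi>)" "(\<Phi>, \<Psi>) \<in> dirac_rel G m \<Lambda>" by blast
    show "p \<in> {(\<Phi>, \<Psi>) | \<Phi> \<Psi>. (Tmap \<Phi>, \<Psi>) \<in> dirac_rel G m (conj_rel \<Lambda>)}"
      using K[OF p(2)] p(1) by blast
  next
    fix p assume "p \<in> {(\<Phi>, \<Psi>) | \<Phi> \<Psi>. (Tmap \<Phi>, \<Psi>) \<in> dirac_rel G m (conj_rel \<Lambda>)}"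
    then obtain \<Phi> \<Psi> where p: "p = (\<Phi>, \<Psi>)" "(Tmap \<Phi>, \<Psi>) \<in> dirac_rel G m (conj_rel \<Lambda>)" by blast
    have "(\<Phi>, Tmap \<Psi>) \<in> dirac_rel G m \<Lambda>" using K2[OF p(2)] by simp
    moreover have "p = (\<Phi>, Tmap (Tmap \<Psi>))" using p(1) by simp
    ultimately show "p \<in> {(\<Phi>, Tmap \<Psi>) | \<Phi> \<Psi>. (\<Phi>, \<Psi>) \<in> dirac_rel G m \<Lambda>}" by blast
  qed
  show "dirac_rel G m (conj_rel \<Lambda>) = {(Tmap \<Phi>, Tmap \<Psi>) | \<Phi> \<Psi>. (\<Phi>, \<Psi>) \<in> dirac_rel G m \<Lambda>}"
  proof (intro equalityI subsetI)
    fix p assume p0: "p \<in> dirac_rel G m (conj_rel \<Lambda>)"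
    obtain \<Phi> \<Psi> where p: "p = (\<Phi>, \<Psi>)" by (cases p)
    have "(Tmap \<Phi>, Tmap \<Psi>) \<in> dirac_rel G m \<Lambda>" using K2 p0 p by simp
    moreover have "p = (Tmap (Tmap \<Phi>), Tmap (Tmap \<Psi>))" using p by simp
    ultimately show "p \<in> {(Tmap \<Phi>, Tmap \<Psi>) | \<Phi> \<Psi>. (\<Phi>, \<Psi>) \<in> dirac_rel G m \<Lambda>}" by blast
  next
    fix p assume "p \<in> {(Tmap \<Phi>, Tmap \<Psi>) | \<Phi> \<Psi>. (\<Phi>, \<Psi>) \<in> dirac_rel G m \<Lambda>}"
    then show "p \<in> dirac_rel G m (conj_rel \<Lambda>)" using K by blast
  qed
qed

end
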